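(* Let $X$ be a connected finite topological space. Then there exist a connected subspace $Y\subseteq X$ which is $T_0$ and of height at most two, a point $y\in Y$, and a surjective group homomorphism $\pi_1(Y,y)\to\pi_1(X,y)$.
   Context: A finite $T_0$-space is identified with the poset in which $a\le b$ iff $a$ lies in every open set containing $b$; its height is the maximum number of elements of a chain. *)

theory Defs
  imports "HOL-Analysis.Analysis" "HOL-Algebra.Group"
begin

definition spec_le :: "'a topology \<Rightarrow> 'a \<Rightarrow> 'a \<Rightarrow> bool" where
  "spec_le X a b \<longleftrightarrow> a \<in> topspace X \<and> b \<in> topspace X \<and>
     (\<forall>U. openin X U \<and> b \<in> U \<longrightarrow> a \<in> U)"

definition spec_chain :: "'a topology \<Rightarrow> 'a set \<Rightarrow> bool" where
  "spec_chain X C \<longleftrightarrow> C \<subseteq> topspace X \<and>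
     (\<forall>a\<in>C. \<forall>b\<in>C. spec_le X a b \<or> spec_le X b a)"

definition height_le :: "'a topology \<Rightarrow> nat \<Rightarrow> bool" where
  "height_le X n \<longleftrightarrow> (\<forall>C. spec_chain X C \<longrightarrow> finite C \<and> card C \<le> n)"

definition loopin :: "'a topology \<Rightarrow> 'a \<Rightarrow> (real \<Rightarrow> 'a) \<Rightarrow> bool" where
  "loopin X x p \<longleftrightarrow> pathin X p \<and> p 0 = x \<and> p 1 = x"

definition loop_homotopic :: "'a topology \<Rightarrow> 'a \<Rightarrow> (real \<Rightarrow> 'a) \<Rightarrow> (real \<Rightarrow> 'a) \<Rightarrow> bool" where
  "loop_homotopic X x p q \<longleftrightarrow> loopin X x p \<and> loopin X x q \<and>
     homotopic_with (\<lambda>h. h 0 = x \<and> h 1 = x) (top_of_set {0..1}) X p q"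

definition loop_class :: "'a topology \<Rightarrow> 'a \<Rightarrow> (real \<Rightarrow> 'a) \<Rightarrow> (real \<Rightarrow> 'a) set" where
  "loop_class X x p = {q. loop_homotopic X x p q}"

definition path_concat :: "(real \<Rightarrow> 'a) \<Rightarrow> (real \<Rightarrow> 'a) \<Rightarrow> real \<Rightarrow> 'a" where
  "path_concat p q t = (if t \<le> 1/2 then p (2 * t) else q (2 * t - 1))"

definition fundamental_group :: "'a topology \<Rightarrow> 'a \<Rightarrow> (real \<Rightarrow> 'a) set monoid" where
  "fundamental_group X x =
     \<lparr> carrier = {loop_class X x p | p. loopin X x p},
       mult = (\<lambda>A B. loop_class X x (path_concat (SOME p. p \<in> A) (SOME q. q \<in> B))),
       one = loop_class X x (\<lambda>t. x) \<rparr>"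

end

theory Submission
  imports Defs
begin


lemma spec_le_refl: "a \<in> topspace X \<Longrightarrow> spec_le X a a"
  by (simp add: spec_le_def)

lemma spec_le_trans: "spec_le X a b \<Longrightarrow> spec_le X b c \<Longrightarrow> spec_le X a c"
  by (simp add: spec_le_def)

lemma spec_le_top: "spec_le X a b \<Longrightarrow> a \<in> topspace X \<and> b \<in> topspace X"
  by (simp add: spec_le_def)

lemma downset_open:
  assumes "finite (topspace X)" "x \<in> topspace X"
  shows "openin X {z \<in> topspace X. spec_le X z x}"
proof -
  let ?F = "{U. openin X U \<and> x \<in> U}"
  have fin: "finite ?F"
    by (rule finite_subset[of _ "Pow (topspace X)"]) (auto dest: openin_subset simp: assms)
  have "openin X (\<Inter>?F)"
    by (rule openin_Inter) (use fin assms in auto)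
  moreover have "\<Inter>?F = {z \<in> topspace X. spec_le X z x}"
    using assms(2) by (auto simp: spec_le_def)
  ultimately show ?thesis by simp
qed

lemma downclosed_open:
  assumes "finite (topspace X)" "V \<subseteq> topspace X"
    and "\<And>x z. x \<in> V \<Longrightarrow> spec_le X z x \<Longrightarrow> z \<in> V"
  shows "openin X V"
proof -
  have "V = (\<Union>x\<in>V. {z \<in> topspace X. spec_le X z x})"
    using assms by (auto intro: spec_le_refl)
  moreover have "openin X (\<Union>x\<in>V. {z \<in> topspace X. spec_le X z x})"
  proof (rule openin_Union)
    fix S assume "S \<in> (\<lambda>x. {z \<in> topspace X. spec_le X z x}) ` V"
    then obtain x where "x \<in> V" "S = {z \<in> topspace X. spec_le X z x}" by blast
    then show "openin X S" using downset_open[OF assms(1)] assms(2) by blast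
  qed
  ultimately show ?thesis by simp
qed

lemma cont_char:
  fixes S :: "'b::metric_space set"
  assumes "\<And>t. t \<in> S \<Longrightarrow> f t \<in> topspace X"
    and "\<And>t. t \<in> S \<Longrightarrow> \<exists>e>0. \<forall>s\<in>S. dist s t < e \<longrightarrow> spec_le X (f s) (f t)"
  shows "continuous_map (top_of_set S) X f"
  unfolding continuous_map_def
proof (intro conjI allI impI)
  show "f \<in> topspace (top_of_set S) \<rightarrow> topspace X" using assms(1) by auto
  fix U assume U: "openin X U"
  show "openin (top_of_set S) {x \<in> topspace (top_of_set S). f x \<in> U}"
    unfolding openin_euclidean_subtopology_iff
  proof (intro conjI ballI)
    fix t assume t: "t \<in> {x \<in> topspace (top_of_set S). f x \<in> U}"
    then obtain e where "e>0" "\<forall>s\<in>S. dist s t < e \<longrightarrow> spec_le X (f s) (f t)"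
      using assms(2) by auto
    then show "\<exists>e>0. \<forall>x'\<in>S. dist x' t < e \<longrightarrow> x' \<in> {x \<in> topspace (top_of_set S). f x \<in> U}"
      using t U by (auto simp: spec_le_def)
  qed auto
qed

lemma cont_local:
  fixes S :: "'b::metric_space set"
  assumes "finite (topspace X)" "continuous_map (top_of_set S) X f" "t \<in> S"
  shows "\<exists>e>0. \<forall>s\<in>S. dist s t < e \<longrightarrow> spec_le X (f s) (f t)"
proof -
  have ft: "f t \<in> topspace X" using assms(2,3) by (auto simp: continuous_map_def)
  have fS: "\<And>s. s \<in> S \<Longrightarrow> f s \<in> topspace X" using assms(2) by (auto simp: continuous_map_def)
  have "openin (top_of_set S) {x \<in> topspace (top_of_set S). f x \<in> {z \<in> topspace X. spec_le X z (f t)}}"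
    using assms(2) downset_open[OF assms(1) ft] by (auto simp: continuous_map_def)
  then have "openin (top_of_set S) {x \<in> S. spec_le X (f x) (f t)}"
    using fS by (auto simp: spec_le_def)
  moreover have "t \<in> {x \<in> S. spec_le X (f x) (f t)}" using assms(3) ft by (simp add: spec_le_refl)
  ultimately show ?thesis unfolding openin_euclidean_subtopology_iff by blast
qed

lemma spec_le_sub:
  assumes "S \<subseteq> topspace X" "a \<in> S" "b \<in> S"
  shows "spec_le (subtopology X S) a b \<longleftrightarrow> spec_le X a b"
proof
  assume "spec_le (subtopology X S) a b"
  then show "spec_le X a b"
    using assms unfolding spec_le_def openin_subtopology by blast
next
  assume "spec_le X a b"
  then show "spec_le (subtopology X S) a b"
    using assms unfolding spec_le_def openin_subtopology by auto
qed

lemma compare_homotopic: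
  assumes fin: "finite (topspace X)"
    and f: "continuous_map (top_of_set {0..1}) X f" and g: "continuous_map (top_of_set {0..1}) X g"
    and fg: "\<And>t. t \<in> {0..1::real} \<Longrightarrow> spec_le X (f t) (g t)"
    and e: "f 0 = y" "f 1 = y" "g 0 = y" "g 1 = y"
  shows "homotopic_with (\<lambda>h. h 0 = y \<and> h 1 = y) (top_of_set {0..1}) X f g"
proof -
  let ?H = "\<lambda>(s::real,t::real). if s < 1 then f t else g t"
  have "continuous_map (top_of_set ({0..1} \<times> {0..1})) X ?H"
  proof (rule cont_char)
    fix z :: "real \<times> real" assume z: "z \<in> {0..1} \<times> {0..1}"
    then show "?H z \<in> topspace X" using f g by (auto simp: continuous_map_def split: prod.splits)
    obtain s t where st: "z = (s,t)" by force
    have t: "t \<in> {0..1}" and s: "s \<in> {0..1}" using z st by auto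
    obtain e1 where e1: "e1 > 0" "\<forall>t'\<in>{0..1}. dist t' t < e1 \<longrightarrow> spec_le X (f t') (f t)"
      using cont_local[OF fin f t] by blast
    obtain e2 where e2: "e2 > 0" "\<forall>t'\<in>{0..1}. dist t' t < e2 \<longrightarrow> spec_le X (g t') (g t)"
      using cont_local[OF fin g t] by blast
    show "\<exists>e>0. \<forall>w\<in>{0..1} \<times> {0..1}. dist w z < e \<longrightarrow> spec_le X (?H w) (?H z)"
    proof (cases "s < 1")
      case True
      show ?thesis
      proof (intro exI conjI ballI impI)
        show "min e1 (1 - s) > 0" using True e1 by simp
        fix w :: "real \<times> real" assume w: "w \<in> {0..1} \<times> {0..1}" "dist w z < min e1 (1 - s)"
        obtain s' t' where w': "w = (s',t')" by force
        have "dist s' s < 1 - s" "dist t' t < e1"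
          using w dist_fst_le[of w z] dist_snd_le[of w z] by (auto simp: w' st)
        then have "s' < 1" by (auto simp: dist_real_def)
        then show "spec_le X (?H w) (?H z)"
          using e1 w `dist t' t < e1` True by (auto simp: w' st)
      qed
    next
      case False
      then have s1: "s = 1" using s by auto
      show ?thesis
      proof (intro exI conjI ballI impI)
        show "min e1 e2 > 0" using e1 e2 by simp
        fix w :: "real \<times> real" assume w: "w \<in> {0..1} \<times> {0..1}" "dist w z < min e1 e2"
        obtain s' t' where w': "w = (s',t')" by force
        have d: "dist t' t < e1" "dist t' t < e2" and t': "t' \<in> {0..1}"
          using w dist_snd_le[of w z] by (auto simp: w' st)
        have 1: "spec_le X (f t') (g t')" using fg[OF t'] .
        have 2: "spec_le X (g t') (g t)" using e2(2) d(2) t' by simp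
        have "spec_le X (f t') (g t)" by (rule spec_le_trans[OF 1 2])
        moreover note 2
        ultimately show "spec_le X (?H w) (?H z)"
          using s1 by (auto simp: w' st)
      qed
    qed
  qed
  then have "continuous_map (prod_topology (top_of_set {0..1}) (top_of_set {0..1})) X ?H"
    by simp
  moreover have "\<forall>x. ?H (0,x) = f x" "\<forall>x. ?H (1,x) = g x"
    "\<forall>t\<in>{0..1}. (\<lambda>x. ?H (t,x)) 0 = y \<and> (\<lambda>x. ?H (t,x)) 1 = y" using e by auto
  ultimately show ?thesis unfolding homotopic_with_def by blast
qed

lemma loop_homotopic_refl: "loopin X x p \<Longrightarrow> loop_homotopic X x p p"
  by (auto simp: loop_homotopic_def loopin_def pathin_def)

lemma loop_homotopic_sym: "loop_homotopic X x p q \<Longrightarrow> loop_homotopic X x q p"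
  by (auto simp: loop_homotopic_def intro: homotopic_with_symD)

lemma loop_homotopic_trans: "loop_homotopic X x p q \<Longrightarrow> loop_homotopic X x q r \<Longrightarrow> loop_homotopic X x p r"
  by (auto simp: loop_homotopic_def intro: homotopic_with_trans)

lemma loop_class_eq: "loop_homotopic X x p q \<Longrightarrow> loop_class X x p = loop_class X x q"
  unfolding loop_class_def
  by (auto intro: loop_homotopic_trans loop_homotopic_sym)

lemma loop_class_some: "loopin X x p \<Longrightarrow> loop_homotopic X x p (SOME q. q \<in> loop_class X x p)"
  unfolding loop_class_def mem_Collect_eq by (rule someI[of _ p]) (rule loop_homotopic_refl)

lemma loop_homotopic_sub:
  assumes "loop_homotopic (subtopology X S) x p q"
  shows "loop_homotopic X x p q"
proof -
  have h: "homotopic_with (\<lambda>h. h 0 = x \<and> h 1 = x) (top_of_set {0..1}) (subtopology X S) p q"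
    using assms by (simp add: loop_homotopic_def)
  have c: "continuous_map (subtopology X S) X id"
    by (simp add: continuous_map_from_subtopology)
  have "homotopic_with (\<lambda>h. h 0 = x \<and> h 1 = x) (top_of_set {0..1}) X (id \<circ> p) (id \<circ> q)"
    by (rule homotopic_with_compose_continuous_map_left[OF h c]) simp
  then show ?thesis using assms
    by (auto simp: loop_homotopic_def loopin_def pathin_subtopology)
qed

lemma loop_homotopic_concat:
  assumes "loop_homotopic X x p p'" "loop_homotopic X x q q'"
  shows "loop_homotopic X x (path_concat p q) (path_concat p' q')"
proof -
  let ?I = "top_of_set {0..1::real}"
  let ?X01 = "prod_topology ?I ?I"
  obtain k1 where k1: "continuous_map ?X01 X k1" "\<forall>t. k1 (0, t) = p t" "\<forall>t. k1 (1, t) = p' t"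
    "\<forall>s\<in>{0..1}. k1 (s, 0) = x \<and> k1 (s, 1) = x"
    using assms(1) unfolding loop_homotopic_def homotopic_with_def by auto
  obtain k2 where k2: "continuous_map ?X01 X k2" "\<forall>t. k2 (0, t) = q t" "\<forall>t. k2 (1, t) = q' t"
    "\<forall>s\<in>{0..1}. k2 (s, 0) = x \<and> k2 (s, 1) = x"
    using assms(2) unfolding loop_homotopic_def homotopic_with_def by auto
  define k where "k \<equiv> \<lambda>y. if snd y \<le> 1/2
                             then (k1 \<circ> (\<lambda>z. (fst z, 2 * snd z))) y
                             else (k2 \<circ> (\<lambda>z. (fst z, 2 * snd z - 1))) y"
  have hom: "homotopic_with (\<lambda>h. h 0 = x \<and> h 1 = x) ?I X (path_concat p q) (path_concat p' q')"
    unfolding homotopic_with_def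
  proof (intro exI conjI)
    show "continuous_map ?X01 X k"
      unfolding k_def
    proof (rule continuous_map_cases_le)
      show snd: "continuous_map ?X01 euclideanreal snd"
        using continuous_map_snd continuous_map_in_subtopology by blast
      show "continuous_map ?X01 euclideanreal (\<lambda>x. 1/2)"
        by simp
      show "continuous_map (subtopology ?X01 {y \<in> topspace ?X01. snd y \<le> 1/2}) X
               (k1 \<circ> (\<lambda>z. (fst z, 2 * snd z)))"
        apply (intro snd continuous_map_compose [OF _ k1(1)] continuous_intros continuous_map_into_subtopology continuous_map_from_subtopology | simp)+
        by (force simp: prod_topology_subtopology)
      show "continuous_map (subtopology ?X01 {y \<in> topspace ?X01. 1/2 \<le> snd y}) X
               (k2 \<circ> (\<lambda>z. (fst z, 2 * snd z - 1)))"
        apply (intro snd continuous_map_compose [OF _ k2(1)] continuous_intros continuous_map_into_subtopology continuous_map_from_subtopology | simp)+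
        by (force simp: prod_topology_subtopology)
      show "(k1 \<circ> (\<lambda>z. (fst z, 2 * snd z))) y = (k2 \<circ> (\<lambda>z. (fst z, 2 * snd z - 1))) y"
        if "y \<in> topspace ?X01" and "snd y = 1/2" for y
      proof -
        obtain a b where y: "y = (a,b)" by force
        have "a \<in> {0..1}" using that y by auto
        moreover have "2 * b = 1" "2 * b - 1 = 0" using that y by auto
        ultimately show ?thesis using k1(4) k2(4) y by simp
      qed
    qed
    show "\<forall>t. k (0, t) = path_concat p q t"
      by (simp add: k1 k2 k_def path_concat_def)
    show "\<forall>t. k (1, t) = path_concat p' q' t"
      by (simp add: k1 k2 k_def path_concat_def)
    show "\<forall>s\<in>{0..1}. k (s, 0) = x \<and> k (s, 1) = x"
      using k1(4) k2(4) by (simp add: k_def)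
  qed
  have "pathin X (path_concat p q) \<and> pathin X (path_concat p' q')"
    using homotopic_with_imp_continuous_maps[OF hom] by (simp add: pathin_def)
  moreover have "p 0 = x" "q 1 = x" "p' 0 = x" "q' 1 = x"
    using assms by (auto simp: loop_homotopic_def loopin_def)
  then have "path_concat p q 0 = x" "path_concat p q 1 = x"
    "path_concat p' q' 0 = x" "path_concat p' q' 1 = x"
    by (simp_all add: path_concat_def)
  ultimately show ?thesis using hom unfolding loop_homotopic_def loopin_def by blast
qed




lemma int_le_of_real_lt: "real_of_int a < real_of_int b + 1 \<Longrightarrow> a \<le> b"
proof -
  assume "real_of_int a < real_of_int b + 1"
  then have "real_of_int a < real_of_int (b + 1)" by simp
  then have "a < b + 1" by (simp only: of_int_less_iff)
  then show ?thesis by simp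
qed

lemma FA:
  fixes x :: real and n :: nat
  assumes "0 \<le> x" "x \<le> real n"
  shows "0 \<le> \<lfloor>x + 1/2\<rfloor> \<and> \<lfloor>x + 1/2\<rfloor> \<le> int n"
proof
  show "0 \<le> \<lfloor>x + 1/2\<rfloor>" using assms by simp
  have "real_of_int \<lfloor>x + 1/2\<rfloor> \<le> x + 1/2" by (rule of_int_floor_le)
  then have "real_of_int \<lfloor>x + 1/2\<rfloor> < real_of_int (int n) + 1"
    using assms by (simp only: of_int_of_nat_eq)
  then show "\<lfloor>x + 1/2\<rfloor> \<le> int n" by (rule int_le_of_real_lt)
qed

lemma FB:
  fixes x x' :: real
  assumes m: "of_int \<lfloor>x + 1/2\<rfloor> = x + 1/2" and d: "\<bar>x' - x\<bar> < 1/2"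
  shows "\<lfloor>x\<rfloor> = \<lfloor>x + 1/2\<rfloor> - 1 \<and> of_int \<lfloor>x\<rfloor> < x' \<and> x' < of_int \<lfloor>x\<rfloor> + 1
     \<and> \<lfloor>x\<rfloor> \<le> \<lfloor>x' + 1/2\<rfloor> \<and> \<lfloor>x' + 1/2\<rfloor> \<le> \<lfloor>x\<rfloor> + 1
     \<and> (of_int \<lfloor>x' + 1/2\<rfloor> = x' + 1/2 \<longrightarrow> x' = x)"
proof -
  define k where "k = \<lfloor>x + 1/2\<rfloor>"
  have xk: "x = of_int k - 1/2" unfolding k_def using m by linarith
  have fx: "\<lfloor>x\<rfloor> = k - 1"
    unfolding floor_eq_iff using xk by simp
  define j where "j = \<lfloor>x' + 1/2\<rfloor>"
  have j1: "of_int j \<le> x' + 1/2" "x' + 1/2 < of_int j + 1"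
    unfolding j_def by (simp_all add: of_int_floor_le)
  have "real_of_int j < real_of_int k + 1" using j1 d xk by linarith
  then have jk: "j \<le> k" by (rule int_le_of_real_lt)
  have d': "x' - x < 1/2" "x - x' < 1/2" using d abs_less_iff[of "x' - x" "1/2"] by linarith+
  have "real_of_int (k - 1) < real_of_int j + 1" using j1 d' xk by (simp only: of_int_diff of_int_1)
  then have kj: "k - 1 \<le> j" by (rule int_le_of_real_lt)
  have last: "of_int j = x' + 1/2 \<Longrightarrow> x' = x"
  proof -
    assume a: "of_int j = x' + 1/2"
    have "j \<noteq> k - 1" using a d xk by auto
    moreover have "j \<noteq> k \<or> x' = x" using a xk by auto
    ultimately show "x' = x" using jk kj by auto
  qed
  have rf: "real_of_int \<lfloor>x\<rfloor> = real_of_int k - 1" using fx by simp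
  have "real_of_int \<lfloor>x\<rfloor> < x'" "x' < real_of_int \<lfloor>x\<rfloor> + 1" using rf d' xk by linarith+
  then show ?thesis
    using fx jk kj last unfolding k_def[symmetric] j_def[symmetric] by auto
qed

lemma FC:
  fixes x :: real
  assumes m: "of_int \<lfloor>x + 1/2\<rfloor> \<noteq> x + 1/2"
  shows "\<exists>d>0. \<forall>x'. \<bar>x' - x\<bar> < d \<longrightarrow> \<lfloor>x' + 1/2\<rfloor> = \<lfloor>x + 1/2\<rfloor> \<and> of_int \<lfloor>x' + 1/2\<rfloor> \<noteq> x' + 1/2"
proof -
  define k where "k = \<lfloor>x + 1/2\<rfloor>"
  have k1: "of_int k < x + 1/2" "x + 1/2 < of_int k + 1"
    using m of_int_floor_le[of "x + 1/2"] unfolding k_def by (auto simp: order_le_less)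
  define d where "d = min (x + 1/2 - of_int k) (of_int k + 1 - (x + 1/2))"
  have "d > 0" using k1 by (simp add: d_def)
  moreover have "\<lfloor>x' + 1/2\<rfloor> = k \<and> of_int \<lfloor>x' + 1/2\<rfloor> \<noteq> x' + 1/2" if "\<bar>x' - x\<bar> < d" for x'
  proof -
    have a: "of_int k < x' + 1/2" "x' + 1/2 < of_int k + 1" using that k1 by (auto simp: d_def)
    then have "\<lfloor>x' + 1/2\<rfloor> = k" unfolding floor_eq_iff by simp
    then show ?thesis using a by simp
  qed
  ultimately show ?thesis unfolding k_def by blast
qed




lemma loop_reduce:
  assumes fin: "finite (topspace X)" and gam: "loopin X y \<gamma>"
    and Ysub: "Y \<subseteq> topspace X" and yY: "y \<in> Y"
    and low: "\<And>x. x \<in> topspace X \<Longrightarrow> \<exists>a\<in>Y. spec_le X a x"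
    and high: "\<And>x. x \<in> topspace X \<Longrightarrow> \<exists>m\<in>Y. spec_le X x m"
  shows "\<exists>\<epsilon>. loopin (subtopology X Y) y \<epsilon> \<and> loop_homotopic X y \<gamma> \<epsilon>"
proof -
  have gc: "continuous_map (top_of_set {0..1}) X \<gamma>" and g0: "\<gamma> 0 = y" and g1: "\<gamma> 1 = y"
    using gam by (auto simp: loopin_def pathin_def)
  have gtop: "\<gamma> t \<in> topspace X" if "t \<in> {0..1}" for t
    using gc that by (auto simp: continuous_map_def)
  have gloc: "\<exists>e>0. \<forall>s\<in>{0..1}. dist s t < e \<longrightarrow> spec_le X (\<gamma> s) (\<gamma> t)" if "t \<in> {0..1}" for t
    using cont_local[OF fin gc that] .
  define CC where "CC = {ball t e | t e. t \<in> {0..1::real} \<and> e > 0 \<and>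
        (\<exists>m\<in>Y. \<forall>s\<in>{0..1}. dist s t < e \<longrightarrow> spec_le X (\<gamma> s) m)}"
  have cov: "{0..1} \<subseteq> \<Union>CC"
  proof
    fix t :: real assume t: "t \<in> {0..1}"
    obtain e where e: "e>0" "\<forall>s\<in>{0..1}. dist s t < e \<longrightarrow> spec_le X (\<gamma> s) (\<gamma> t)"
      using gloc[OF t] by blast
    obtain m where m: "m \<in> Y" "spec_le X (\<gamma> t) m" using high[OF gtop[OF t]] by blast
    have "\<forall>s\<in>{0..1}. dist s t < e \<longrightarrow> spec_le X (\<gamma> s) m"
    proof (intro ballI impI)
      fix s :: real assume "s \<in> {0..1}" "dist s t < e"
      then have "spec_le X (\<gamma> s) (\<gamma> t)" using e(2) by simp
      then show "spec_le X (\<gamma> s) m" using m(2) by (rule spec_le_trans)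
    qed
    then have "ball t e \<in> CC" using t e(1) m(1) unfolding CC_def by blast
    moreover have "t \<in> ball t e" using e(1) by simp
    ultimately show "t \<in> \<Union>CC" by blast
  qed
  have ne: "CC \<noteq> {}" using cov by auto
  have op: "\<And>B. B \<in> CC \<Longrightarrow> open B" unfolding CC_def by auto
  obtain \<delta> where dl: "\<delta> > 0" "\<And>T. T \<subseteq> {0..1} \<Longrightarrow> diameter T < \<delta> \<Longrightarrow> \<exists>B\<in>CC. T \<subseteq> B"
  proof (rule Lebesgue_number_lemma[OF compact_Icc ne cov])
    fix B assume "B \<in> CC" then show "open B" by (rule op)
  next
    fix \<delta> assume "0 < \<delta>" "\<And>T. \<lbrakk>T \<subseteq> {0..1}; diameter T < \<delta>\<rbrakk> \<Longrightarrow> \<exists>B\<in>CC. T \<subseteq> B"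
    then show thesis by (rule that)
  qed
  obtain n :: nat where n: "n > 0" "inverse (real n) < \<delta>"
    using ex_inverse_of_nat_less[OF dl(1)] by blast
  define N where "N = real n"
  have N: "N > 0" using n by (simp add: N_def)
  have intv: "\<exists>m\<in>Y. \<forall>s\<in>{of_int i/N..(of_int i+1)/N}. spec_le X (\<gamma> s) m"
    if i: "0 \<le> i" "i < int n" for i :: int
  proof -
    have iN: "real_of_int i + 1 \<le> N" using i by (simp add: N_def)
    have i0: "0 \<le> real_of_int i" using i by simp
    have sub: "{of_int i/N..(of_int i+1)/N} \<subseteq> {0..1}"
    proof
      fix s assume "s \<in> {of_int i/N..(of_int i+1)/N}"
      then have "of_int i / N \<le> s" "s \<le> (of_int i + 1) / N" by auto
      moreover have "0 \<le> of_int i / N" using i0 N by simp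
      moreover have "(of_int i + 1) / N \<le> 1" using iN N by simp
      ultimately show "s \<in> {0..1}" by auto
    qed
    have le: "of_int i / N \<le> (of_int i + 1) / N" using N by (simp add: divide_right_mono)
    have "diameter {of_int i/N..(of_int i+1)/N} = (of_int i+1)/N - of_int i/N"
      using le by simp
    also have "\<dots> = inverse N" by (simp add: divide_inverse algebra_simps)
    finally have "diameter {of_int i/N..(of_int i+1)/N} < \<delta>" using n(2) by (simp add: N_def)
    then obtain B where B: "B \<in> CC" "{of_int i/N..(of_int i+1)/N} \<subseteq> B" using dl(2)[OF sub] by blast
    then obtain t e m where tem: "B = ball t e" "m \<in> Y" "\<forall>s\<in>{0..1}. dist s t < e \<longrightarrow> spec_le X (\<gamma> s) m"
      unfolding CC_def by blast
    have "\<forall>s\<in>{of_int i/N..(of_int i+1)/N}. spec_le X (\<gamma> s) m"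
    proof
      fix s assume s: "s \<in> {of_int i/N..(of_int i+1)/N}"
      then have "s \<in> ball t e" using B(2) tem(1) by blast
      then have "dist s t < e" by (simp add: dist_commute)
      moreover have "s \<in> {0..1}" using s sub by blast
      ultimately show "spec_le X (\<gamma> s) m" using tem(3) by blast
    qed
    then show ?thesis using tem(2) by blast
  qed
  define C where "C i = (SOME m. m \<in> Y \<and> (\<forall>s\<in>{of_int i/N..(of_int i+1)/N}. spec_le X (\<gamma> s) m))" for i :: int
  have C: "C i \<in> Y \<and> (\<forall>s\<in>{of_int i/N..(of_int i+1)/N}. spec_le X (\<gamma> s) (C i))"
    if "0 \<le> i" "i < int n" for i
    unfolding C_def by (rule someI_ex) (use intv[OF that] in blast)
  define amin where "amin x = (if x = y then y else SOME a. a \<in> Y \<and> spec_le X a x)" for x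
  have amin: "amin x \<in> Y \<and> spec_le X (amin x) x" if "x \<in> topspace X" for x
  proof (cases "x = y")
    case True then show ?thesis using yY that by (simp add: amin_def spec_le_refl)
  next
    case False
    have "\<exists>a. a \<in> Y \<and> spec_le X a x" using low[OF that] by blast
    then have "(SOME a. a \<in> Y \<and> spec_le X a x) \<in> Y \<and> spec_le X (SOME a. a \<in> Y \<and> spec_le X a x) x"
      by (rule someI_ex)
    then show ?thesis using False by (simp add: amin_def)
  qed

  define mid where "mid t \<longleftrightarrow> real_of_int \<lfloor>N * t + 1/2\<rfloor> = N * t + 1/2" for t :: real
  define rho where "rho t = real_of_int \<lfloor>N * t + 1/2\<rfloor> / N" for t :: real
  define K where "K t = C \<lfloor>N * t\<rfloor>" for t :: real
  define sig where "sig u t = rho t + (1-u)*(t - rho t)" for u t :: real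
  define H where "H = (\<lambda>(u,t). if mid t then K t else \<gamma> (sig u t))"
  define p' where "p' t = (if mid t then K t else \<gamma> t)" for t
  define ep where "ep t = (if mid t then K t else \<gamma> (rho t))" for t
  define ep' where "ep' t = (if mid t then K t else amin (\<gamma> (rho t)))" for t
  have rho01: "rho t \<in> {0..1}" if t: "t \<in> {0..1}" for t
  proof -
    have "0 \<le> N * t" "N * t \<le> real n" using t N by (auto simp: N_def)
    from FA[OF this] have "0 \<le> \<lfloor>N * t + 1/2\<rfloor>" "\<lfloor>N * t + 1/2\<rfloor> \<le> int n" by auto
    then have "0 \<le> real_of_int \<lfloor>N * t + 1/2\<rfloor>" "real_of_int \<lfloor>N * t + 1/2\<rfloor> \<le> N"
      by (simp_all add: N_def)
    then show ?thesis using N by (simp add: rho_def)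
  qed
  have sig01: "sig u t \<in> {0..1}" if "u \<in> {0..1}" "t \<in> {0..1}" for u t
  proof -
    have "sig u t = u * rho t + (1-u) * t" by (simp add: sig_def algebra_simps)
    moreover have "0 \<le> u * rho t" "u * rho t \<le> u" using rho01[OF that(2)] that(1)
      by (auto simp: mult_left_le)
    moreover have "0 \<le> (1-u) * t" "(1-u) * t \<le> 1 - u" using that
      by (auto simp: mult_left_le)
    ultimately show ?thesis by auto
  qed
  have midF: "0 \<le> \<lfloor>N * t\<rfloor> \<and> \<lfloor>N * t\<rfloor> < int n \<and>
      s \<in> {of_int \<lfloor>N * t\<rfloor>/N..(of_int \<lfloor>N * t\<rfloor>+1)/N} \<and> rho s \<in> {of_int \<lfloor>N * t\<rfloor>/N..(of_int \<lfloor>N * t\<rfloor>+1)/N}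
      \<and> (mid s \<longrightarrow> s = t)"
    if t: "t \<in> {0..1}" "mid t" and st: "dist s t < 1/(2*N)" for s t
  proof -
    have d: "\<bar>N * s - N * t\<bar> < 1/2"
    proof -
      have "\<bar>N * s - N * t\<bar> = N * \<bar>s - t\<bar>" using N by (simp add: abs_mult right_diff_distrib[symmetric])
      also have "\<dots> < N * (1/(2*N))" by (rule mult_strict_left_mono) (use st N in \<open>auto simp: dist_real_def\<close>)
      also have "\<dots> = 1/2" using N by simp
      finally show ?thesis .
    qed
    have m: "real_of_int \<lfloor>N * t + 1/2\<rfloor> = N * t + 1/2" using t(2) by (simp add: mid_def)
    note fb = FB[OF m d]
    have r: "0 \<le> N * t" "N * t \<le> real n" using t N by (auto simp: N_def)
    from FA[OF r] have k: "0 \<le> \<lfloor>N * t + 1/2\<rfloor>" "\<lfloor>N * t + 1/2\<rfloor> \<le> int n" by auto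
    have k1: "\<lfloor>N * t + 1/2\<rfloor> \<noteq> 0"
    proof
      assume "\<lfloor>N * t + 1/2\<rfloor> = 0" then have "N * t + 1/2 = 0" using m by simp
      then show False using r by simp
    qed
    have i: "0 \<le> \<lfloor>N * t\<rfloor>" "\<lfloor>N * t\<rfloor> < int n" proof -
      have fx: "\<lfloor>N * t\<rfloor> = \<lfloor>N * t + 1/2\<rfloor> - 1" using fb by blast
      have "0 < \<lfloor>N * t + 1/2\<rfloor>" using k(1) k1 by (simp add: less_le)
      then show "0 \<le> \<lfloor>N * t\<rfloor>" "\<lfloor>N * t\<rfloor> < int n" using fx k(2) by linarith+
    qed
    define i where "i = \<lfloor>N * t\<rfloor>"
    have s1: "of_int i \<le> N * s" "N * s \<le> of_int i + 1" using fb unfolding i_def by auto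
    have s2: "of_int i / N \<le> s" "s \<le> (of_int i + 1) / N"
      using s1 N by (simp_all add: divide_le_eq le_divide_eq mult.commute)
    have r1: "i \<le> \<lfloor>N * s + 1/2\<rfloor>" "\<lfloor>N * s + 1/2\<rfloor> \<le> i + 1" using fb unfolding i_def by auto
    then have r2: "real_of_int i \<le> real_of_int \<lfloor>N * s + 1/2\<rfloor>" "real_of_int \<lfloor>N * s + 1/2\<rfloor> \<le> real_of_int i + 1"
      by linarith+
    have r3: "of_int i / N \<le> rho s" "rho s \<le> (of_int i + 1) / N"
      using r2 N unfolding rho_def by (simp_all add: divide_right_mono)
    have "mid s \<longrightarrow> s = t"
    proof
      assume "mid s"
      then have "real_of_int \<lfloor>N * s + 1/2\<rfloor> = N * s + 1/2" by (simp add: mid_def)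
      then have "N * s = N * t" using fb by blast
      then show "s = t" using N by simp
    qed
    then show ?thesis using i s2 r3 unfolding i_def by auto
  qed
  have nmidF: "\<exists>e>0. \<forall>s. dist s t < e \<longrightarrow> \<not> mid s \<and> rho s = rho t" if "\<not> mid t" for t
  proof -
    have "real_of_int \<lfloor>N * t + 1/2\<rfloor> \<noteq> N * t + 1/2" using that by (simp add: mid_def)
    from FC[OF this] obtain d where d: "d > 0"
      "\<forall>x'. \<bar>x' - N * t\<bar> < d \<longrightarrow> \<lfloor>x' + 1/2\<rfloor> = \<lfloor>N * t + 1/2\<rfloor> \<and> real_of_int \<lfloor>x' + 1/2\<rfloor> \<noteq> x' + 1/2"
      by blast
    have "\<not> mid s \<and> rho s = rho t" if "dist s t < d / N" for s
    proof -
      have "\<bar>N * s - N * t\<bar> = N * \<bar>s - t\<bar>" using N by (simp add: abs_mult right_diff_distrib[symmetric])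
      also have "\<dots> < N * (d / N)" by (rule mult_strict_left_mono) (use that N in \<open>auto simp: dist_real_def\<close>)
      also have "\<dots> = d" using N by simp
      finally have "\<bar>N * s - N * t\<bar> < d" .
      then have "\<lfloor>N * s + 1/2\<rfloor> = \<lfloor>N * t + 1/2\<rfloor> \<and> real_of_int \<lfloor>N * s + 1/2\<rfloor> \<noteq> N * s + 1/2"
        using d(2) by blast
      then have e: "\<lfloor>N * s + 1/2\<rfloor> = \<lfloor>N * t + 1/2\<rfloor>" and ne: "real_of_int \<lfloor>N * s + 1/2\<rfloor> \<noteq> N * s + 1/2"
        by blast+
      show ?thesis
      proof
        show "\<not> mid s" using ne unfolding mid_def by blast
        show "rho s = rho t" unfolding rho_def using e by simp
      qed
    qed
    moreover have "d / N > 0" using d(1) N by simp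
    ultimately show ?thesis by blast
  qed
  have mid0: "\<not> mid 0" by (simp add: mid_def)
  have fl1: "\<lfloor>N + 1/2\<rfloor> = int n" unfolding floor_eq_iff by (simp add: N_def)
  have mid1: "\<not> mid 1" using fl1 by (simp add: mid_def N_def)
  have rho0: "rho 0 = 0" by (simp add: rho_def)
  have rho1: "rho 1 = 1" using fl1 N by (simp add: rho_def N_def)

  have Ktop: "K t \<in> Y" "K t \<in> topspace X" if "t \<in> {0..1}" "mid t" for t
  proof -
    have "dist t t < 1/(2*N)" using N by simp
    from midF[OF that(1) that(2) this] have "0 \<le> \<lfloor>N * t\<rfloor>" "\<lfloor>N * t\<rfloor> < int n" by auto
    then show "K t \<in> Y" using C by (simp add: K_def)
    then show "K t \<in> topspace X" using Ysub by blast
  qed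
  have Kab: "spec_le X (\<gamma> s) (K t)" "spec_le X (\<gamma> (rho s)) (K t)"
    if "t \<in> {0..1}" "mid t" "s \<in> {0..1}" "dist s t < 1/(2*N)" for s t
  proof -
    note mf = midF[OF that(1,2) that(4)]
    have "\<forall>s\<in>{of_int \<lfloor>N * t\<rfloor>/N..(of_int \<lfloor>N * t\<rfloor>+1)/N}. spec_le X (\<gamma> s) (K t)"
      using C[of "\<lfloor>N * t\<rfloor>"] mf by (simp add: K_def)
    then show "spec_le X (\<gamma> s) (K t)" "spec_le X (\<gamma> (rho s)) (K t)" using mf by blast+
  qed
  have Hcont: "continuous_map (top_of_set ({0..1} \<times> {0..1})) X H"
  proof (rule cont_char)
    fix z :: "real \<times> real" assume z: "z \<in> {0..1} \<times> {0..1}"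
    obtain u t where ut: "z = (u,t)" by force
    have u: "u \<in> {0..1}" and t: "t \<in> {0..1}" using z ut by auto
    show "H z \<in> topspace X"
      using Ktop[OF t] gtop[OF sig01[OF u t]] by (simp add: H_def ut)
    show "\<exists>e>0. \<forall>w\<in>{0..1} \<times> {0..1}. dist w z < e \<longrightarrow> spec_le X (H w) (H z)"
    proof (cases "mid t")
      case True
      show ?thesis
      proof (intro exI conjI ballI impI)
        show "1/(2*N) > 0" using N by simp
        fix w :: "real \<times> real" assume w: "w \<in> {0..1} \<times> {0..1}" "dist w z < 1/(2*N)"
        obtain u' t' where w': "w = (u',t')" by force
        have u': "u' \<in> {0..1}" and t': "t' \<in> {0..1}" using w w' by auto
        have dt: "dist t' t < 1/(2*N)" using w dist_snd_le[of w z] by (simp add: w' ut)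
        note mf = midF[OF t True dt]
        show "spec_le X (H w) (H z)"
        proof (cases "mid t'")
          case True
          then have "t' = t" using mf by blast
          then show ?thesis using Ktop[OF t \<open>mid t\<close>] by (simp add: H_def w' ut spec_le_refl \<open>mid t\<close>)
        next
          case False
          define i where "i = \<lfloor>N * t\<rfloor>"
          have in1: "t' \<in> {of_int i/N..(of_int i+1)/N}" "rho t' \<in> {of_int i/N..(of_int i+1)/N}"
            using mf unfolding i_def by auto
          have "sig u' t' = u' * rho t' + (1-u') * t'" by (simp add: sig_def algebra_simps)
          moreover have "u' * rho t' + (1-u') * t' \<in> {of_int i/N..(of_int i+1)/N}"
          proof -
            have "u' * (of_int i/N) \<le> u' * rho t'" by (rule mult_left_mono) (use in1 u' in auto)
            moreover have "u' * rho t' \<le> u' * ((of_int i+1)/N)" by (rule mult_left_mono) (use in1 u' in auto)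
            moreover have "(1-u') * (of_int i/N) \<le> (1-u') * t'" by (rule mult_left_mono) (use in1 u' in auto)
            moreover have "(1-u') * t' \<le> (1-u') * ((of_int i+1)/N)" by (rule mult_left_mono) (use in1 u' in auto)
            ultimately have "u' * (of_int i/N) + (1-u') * (of_int i/N) \<le> u' * rho t' + (1-u') * t'"
              "u' * rho t' + (1-u') * t' \<le> u' * ((of_int i+1)/N) + (1-u') * ((of_int i+1)/N)"
              by linarith+
            moreover have "\<And>u a::real. u * a + (1-u) * a = a" by (simp add: algebra_simps)
            ultimately have "of_int i/N \<le> u' * rho t' + (1-u') * t'" "u' * rho t' + (1-u') * t' \<le> (of_int i+1)/N"
              by (metis)+
            then show ?thesis by simp
          qed
          ultimately have "sig u' t' \<in> {of_int i/N..(of_int i+1)/N}" by simp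
          moreover have "\<forall>s\<in>{of_int i/N..(of_int i+1)/N}. spec_le X (\<gamma> s) (K t)"
            using C[of i] mf by (simp add: K_def i_def)
          ultimately show ?thesis using False True by (simp add: H_def w' ut)
        qed
      qed
    next
      case False
      obtain e1 where e1: "e1 > 0" "\<forall>s. dist s t < e1 \<longrightarrow> \<not> mid s \<and> rho s = rho t"
        using nmidF[OF False] by blast
      have tau: "sig u t \<in> {0..1}" using sig01[OF u t] .
      obtain e2 where e2: "e2 > 0" "\<forall>s\<in>{0..1}. dist s (sig u t) < e2 \<longrightarrow> spec_le X (\<gamma> s) (\<gamma> (sig u t))"
        using gloc[OF tau] by blast
      show ?thesis
      proof (intro exI conjI ballI impI)
        show "min e1 (e2/2) > 0" using e1 e2 by simp
        fix w :: "real \<times> real" assume w: "w \<in> {0..1} \<times> {0..1}" "dist w z < min e1 (e2/2)"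
        obtain u' t' where w': "w = (u',t')" by force
        have u': "u' \<in> {0..1}" and t': "t' \<in> {0..1}" using w w' by auto
        have dt: "dist t' t < min e1 (e2/2)" using w dist_snd_le[of w z] by (simp add: w' ut)
        have du: "dist u' u < min e1 (e2/2)" using w dist_fst_le[of w z] by (simp add: w' ut)
        have nm: "\<not> mid t'" and rr: "rho t' = rho t" using e1(2) dt by auto
        define r where "r = rho t"
        have r01: "r \<in> {0..1}" using rho01[OF t] by (simp add: r_def)
        have eq: "sig u' t' - sig u t = (1-u')*(t'-t) + (u-u')*(t-r)"
          using rr by (simp add: sig_def r_def algebra_simps)
        have a1: "\<bar>(1-u')*(t'-t)\<bar> \<le> \<bar>t'-t\<bar>"
        proof -
          have "\<bar>(1-u')*(t'-t)\<bar> = \<bar>1-u'\<bar> * \<bar>t'-t\<bar>" by (simp add: abs_mult)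
          also have "\<dots> \<le> \<bar>t'-t\<bar>" using u' by (intro mult_left_le_one_le) auto
          finally show ?thesis .
        qed
        have a2: "\<bar>(u-u')*(t-r)\<bar> \<le> \<bar>u-u'\<bar>"
        proof -
          have "\<bar>(u-u')*(t-r)\<bar> = \<bar>u-u'\<bar> * \<bar>t-r\<bar>" by (simp add: abs_mult)
          also have "\<dots> \<le> \<bar>u-u'\<bar>" using t r01 by (intro mult_right_le_one_le) auto
          finally show ?thesis .
        qed
        have "\<bar>sig u' t' - sig u t\<bar> \<le> \<bar>t'-t\<bar> + \<bar>u-u'\<bar>"
          using eq a1 a2 abs_triangle_ineq[of "(1-u')*(t'-t)" "(u-u')*(t-r)"] by linarith
        moreover have "\<bar>t'-t\<bar> < e2/2" "\<bar>u-u'\<bar> < e2/2" using dt du by (auto simp: dist_real_def abs_minus_commute)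
        ultimately have "dist (sig u' t') (sig u t) < e2" by (simp add: dist_real_def)
        then have "spec_le X (\<gamma> (sig u' t')) (\<gamma> (sig u t))" using e2(2) sig01[OF u' t'] by blast
        then show "spec_le X (H w) (H z)" using nm False by (simp add: H_def w' ut)
      qed
    qed
  qed

  let ?P = "\<lambda>h. h 0 = y \<and> h 1 = y"
  have H0: "\<forall>x. H (0, x) = p' x" by (simp add: H_def p'_def sig_def)
  have H1: "\<forall>x. H (1, x) = ep x" by (simp add: H_def ep_def sig_def)
  have HP: "\<forall>u\<in>{0..1}. ?P (\<lambda>x. H (u, x))"
    using mid0 mid1 rho0 rho1 g0 g1 by (simp add: H_def sig_def)
  have Hc: "continuous_map (prod_topology (top_of_set {0..1}) (top_of_set {0..1})) X H"
    using Hcont by simp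
  have hom2: "homotopic_with ?P (top_of_set {0..1}) X p' ep"
    unfolding homotopic_with_def using Hc H0 H1 HP by blast
  have p'c: "continuous_map (top_of_set {0..1}) X p'" and epc: "continuous_map (top_of_set {0..1}) X ep"
    using homotopic_with_imp_continuous_maps[OF hom2] by auto
  have p'e: "p' 0 = y" "p' 1 = y" using mid0 mid1 g0 g1 by (simp_all add: p'_def)
  have epe: "ep 0 = y" "ep 1 = y" using mid0 mid1 g0 g1 rho0 rho1 by (simp_all add: ep_def)
  have ep'e: "ep' 0 = y" "ep' 1 = y" using mid0 mid1 g0 g1 rho0 rho1 by (simp_all add: ep'_def amin_def)
  have hom1: "homotopic_with ?P (top_of_set {0..1}) X \<gamma> p'"
  proof (rule compare_homotopic[OF fin gc p'c])
    fix t :: real assume t: "t \<in> {0..1}"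
    show "spec_le X (\<gamma> t) (p' t)"
    proof (cases "mid t")
      case True
      have "dist t t < 1/(2*N)" using N by simp
      from Kab(1)[OF t True t this] show ?thesis using True by (simp add: p'_def)
    next
      case False then show ?thesis using gtop[OF t] by (simp add: p'_def spec_le_refl)
    qed
  qed (simp_all add: g0 g1 p'e)
  have ep'top: "ep' t \<in> Y" if t: "t \<in> {0..1}" for t
  proof (cases "mid t")
    case True then show ?thesis using Ktop[OF t True] by (simp add: ep'_def)
  next
    case False then show ?thesis using amin[OF gtop[OF rho01[OF t]]] by (simp add: ep'_def)
  qed
  have ep'c: "continuous_map (top_of_set {0..1}) X ep'"
  proof (rule cont_char)
    fix t :: real assume t: "t \<in> {0..1}"
    show "ep' t \<in> topspace X" using ep'top[OF t] Ysub by blast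
    show "\<exists>e>0. \<forall>s\<in>{0..1}. dist s t < e \<longrightarrow> spec_le X (ep' s) (ep' t)"
    proof (cases "mid t")
      case True
      show ?thesis
      proof (intro exI conjI ballI impI)
        show "1/(2*N) > 0" using N by simp
        fix s assume s: "s \<in> {0..1}" "dist s t < 1/(2*N)"
        show "spec_le X (ep' s) (ep' t)"
        proof (cases "mid s")
          case True
          then have "s = t" using midF[OF t \<open>mid t\<close> s(2)] by blast
          then show ?thesis using ep'top[OF t] Ysub by (auto simp: spec_le_refl)
        next
          case False
          have a: "spec_le X (amin (\<gamma> (rho s))) (\<gamma> (rho s))"
            using amin[OF gtop[OF rho01[OF s(1)]]] by blast
          have b: "spec_le X (\<gamma> (rho s)) (K t)" using Kab(2)[OF t True s] .
          from spec_le_trans[OF a b] show ?thesis using False True by (simp add: ep'_def)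
        qed
      qed
    next
      case False
      obtain e1 where e1: "e1 > 0" "\<forall>s. dist s t < e1 \<longrightarrow> \<not> mid s \<and> rho s = rho t"
        using nmidF[OF False] by blast
      show ?thesis
      proof (intro exI conjI ballI impI)
        show "e1 > 0" by (rule e1(1))
        fix s assume s: "s \<in> {0..1}" "dist s t < e1"
        then have "\<not> mid s" "rho s = rho t" using e1(2) by auto
        then have "ep' s = ep' t" using False by (simp add: ep'_def)
        then show "spec_le X (ep' s) (ep' t)" using ep'top[OF t] Ysub by (auto simp: spec_le_refl)
      qed
    qed
  qed
  have hom3: "homotopic_with ?P (top_of_set {0..1}) X ep' ep"
  proof (rule compare_homotopic[OF fin ep'c epc])
    fix t :: real assume t: "t \<in> {0..1}"
    show "spec_le X (ep' t) (ep t)"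
    proof (cases "mid t")
      case True then show ?thesis using Ktop[OF t True] by (simp add: ep'_def ep_def spec_le_refl)
    next
      case False then show ?thesis using amin[OF gtop[OF rho01[OF t]]] by (simp add: ep'_def ep_def)
    qed
  qed (simp_all add: epe ep'e)
  have hall: "homotopic_with ?P (top_of_set {0..1}) X \<gamma> ep'"
    by (rule homotopic_with_trans[OF homotopic_with_trans[OF hom1 hom2] homotopic_with_symD[OF hom3]])
  have l1: "loopin X y ep'" using ep'c ep'e by (simp add: loopin_def pathin_def)
  have l2: "loopin (subtopology X Y) y ep'" using l1 ep'top by (simp add: loopin_def pathin_subtopology)
  have "loop_homotopic X y \<gamma> ep'" using gam l1 hall by (simp add: loop_homotopic_def)
  then show ?thesis using l2 by blast
qed



lemma exists_min:
  assumes fin: "finite (topspace X)" and x: "x \<in> topspace X"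
  shows "\<exists>a. a \<in> topspace X \<and> (\<forall>z. spec_le X z a \<longrightarrow> spec_le X a z) \<and> spec_le X a x"
proof -
  let ?m = "\<lambda>a. card {w \<in> topspace X. spec_le X w a}"
  have "spec_le X x x" using x by (rule spec_le_refl)
  then have "\<exists>a. spec_le X a x \<and> (\<forall>b. spec_le X b x \<longrightarrow> ?m a \<le> ?m b)"
    by (rule ex_has_least_nat)
  then obtain a where a: "spec_le X a x" and amin0: "\<forall>b. spec_le X b x \<longrightarrow> ?m a \<le> ?m b"
    by blast
  have amin: "\<And>b. spec_le X b x \<Longrightarrow> ?m a \<le> ?m b" by (rule amin0[rule_format])
  have "\<forall>z. spec_le X z a \<longrightarrow> spec_le X a z"
  proof (intro allI impI)
    fix z assume za: "spec_le X z a"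
    show "spec_le X a z"
    proof (rule ccontr)
      assume naz: "\<not> spec_le X a z"
      have sub: "{w \<in> topspace X. spec_le X w z} \<subset> {w \<in> topspace X. spec_le X w a}"
      proof
        show "{w \<in> topspace X. spec_le X w z} \<subseteq> {w \<in> topspace X. spec_le X w a}"
        proof (rule subsetI)
          fix w assume w: "w \<in> {w \<in> topspace X. spec_le X w z}"
          then have "spec_le X w a" using spec_le_trans[of X w z a] za by simp
          then show "w \<in> {w \<in> topspace X. spec_le X w a}" using w by simp
        qed
        have "a \<in> topspace X" using za by (simp add: spec_le_def)
        then have "a \<in> {w \<in> topspace X. spec_le X w a}" by (simp add: spec_le_refl)
        moreover have "a \<notin> {w \<in> topspace X. spec_le X w z}" using naz by simp
        ultimately show "{w \<in> topspace X. spec_le X w z} \<noteq> {w \<in> topspace X. spec_le X w a}" by blast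
      qed
      have "?m z < ?m a" by (rule psubset_card_mono) (use fin sub in auto)
      moreover have "spec_le X z x" using za a by (rule spec_le_trans)
      then have "?m a \<le> ?m z" by (rule amin)
      ultimately show False by simp
    qed
  qed
  moreover have "a \<in> topspace X" using a by (simp add: spec_le_def)
  ultimately show ?thesis using a by blast
qed

lemma exists_max:
  assumes fin: "finite (topspace X)" and x: "x \<in> topspace X"
  shows "\<exists>a. a \<in> topspace X \<and> (\<forall>z. spec_le X a z \<longrightarrow> spec_le X z a) \<and> spec_le X x a"
proof -
  let ?m = "\<lambda>a. card {w \<in> topspace X. spec_le X a w}"
  have "spec_le X x x" using x by (rule spec_le_refl)
  then have "\<exists>a. spec_le X x a \<and> (\<forall>b. spec_le X x b \<longrightarrow> ?m a \<le> ?m b)"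
    by (rule ex_has_least_nat)
  then obtain a where a: "spec_le X x a" and amin0: "\<forall>b. spec_le X x b \<longrightarrow> ?m a \<le> ?m b"
    by blast
  have amin: "\<And>b. spec_le X x b \<Longrightarrow> ?m a \<le> ?m b" by (rule amin0[rule_format])
  have "\<forall>z. spec_le X a z \<longrightarrow> spec_le X z a"
  proof (intro allI impI)
    fix z assume za: "spec_le X a z"
    show "spec_le X z a"
    proof (rule ccontr)
      assume naz: "\<not> spec_le X z a"
      have sub: "{w \<in> topspace X. spec_le X z w} \<subset> {w \<in> topspace X. spec_le X a w}"
      proof
        show "{w \<in> topspace X. spec_le X z w} \<subseteq> {w \<in> topspace X. spec_le X a w}"
        proof (rule subsetI)
          fix w assume w: "w \<in> {w \<in> topspace X. spec_le X z w}"
          then have "spec_le X a w" using spec_le_trans[of X a z w] za by simp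
          then show "w \<in> {w \<in> topspace X. spec_le X a w}" using w by simp
        qed
        have "a \<in> topspace X" using za by (simp add: spec_le_def)
        then have "a \<in> {w \<in> topspace X. spec_le X a w}" by (simp add: spec_le_refl)
        moreover have "a \<notin> {w \<in> topspace X. spec_le X z w}" using naz by simp
        ultimately show "{w \<in> topspace X. spec_le X z w} \<noteq> {w \<in> topspace X. spec_le X a w}" by blast
      qed
      have "?m z < ?m a" by (rule psubset_card_mono) (use fin sub in auto)
      moreover have "spec_le X x z" using a za by (rule spec_le_trans)
      then have "?m a \<le> ?m z" by (rule amin)
      ultimately show False by simp
    qed
  qed
  moreover have "a \<in> topspace X" using a by (simp add: spec_le_def)
  ultimately show ?thesis using a by blast
qed




definition smin :: "'a topology \<Rightarrow> 'a \<Rightarrow> bool" where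
  "smin X x \<longleftrightarrow> x \<in> topspace X \<and> (\<forall>z. spec_le X z x \<longrightarrow> spec_le X x z)"
definition smax :: "'a topology \<Rightarrow> 'a \<Rightarrow> bool" where
  "smax X x \<longleftrightarrow> x \<in> topspace X \<and> (\<forall>z. spec_le X x z \<longrightarrow> spec_le X z x)"
definition srep :: "'a topology \<Rightarrow> 'a \<Rightarrow> 'a" where
  "srep X x = (SOME z. spec_le X z x \<and> spec_le X x z)"
definition Yset :: "'a topology \<Rightarrow> 'a set" where
  "Yset X = {x. (smin X x \<or> smax X x) \<and> srep X x = x}"

lemma srep_equiv: "x \<in> topspace X \<Longrightarrow> spec_le X (srep X x) x \<and> spec_le X x (srep X x)"
  unfolding srep_def by (rule someI[of _ x]) (simp add: spec_le_refl)

lemma srep_eq: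
  assumes "spec_le X x x'" "spec_le X x' x"
  shows "srep X x = srep X x'"
proof -
  have "(\<lambda>z. spec_le X z x \<and> spec_le X x z) = (\<lambda>z. spec_le X z x' \<and> spec_le X x' z)"
  proof (rule ext)
    fix z
    show "(spec_le X z x \<and> spec_le X x z) = (spec_le X z x' \<and> spec_le X x' z)"
      using spec_le_trans[of X z x x'] spec_le_trans[of X x' x z] spec_le_trans[of X z x' x]
        spec_le_trans[of X x x' z] assms by blast
  qed
  then show ?thesis unfolding srep_def by simp
qed

lemma Yset_sub: "Yset X \<subseteq> topspace X"
  by (auto simp: Yset_def smin_def smax_def)

lemma Yset_eq:
  assumes "a \<in> Yset X" "b \<in> Yset X" "spec_le X a b" "spec_le X b a"
  shows "a = b"
proof -
  have "srep X a = srep X b" using assms(3,4) by (rule srep_eq)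
  then show ?thesis using assms(1,2) by (simp add: Yset_def)
qed

lemma lowY:
  assumes fin: "finite (topspace X)" and x: "x \<in> topspace X"
  shows "\<exists>a\<in>Yset X. smin X a \<and> spec_le X a x"
proof -
  obtain a0 where a0: "a0 \<in> topspace X" "\<forall>z. spec_le X z a0 \<longrightarrow> spec_le X a0 z" "spec_le X a0 x"
    using exists_min[OF fin x] by blast
  define a where "a = srep X a0"
  have e: "spec_le X a a0" "spec_le X a0 a" using srep_equiv[OF a0(1)] by (simp_all add: a_def)
  have at: "a \<in> topspace X" using e(1) by (simp add: spec_le_def)
  have ma: "smin X a"
    unfolding smin_def
  proof (intro conjI allI impI)
    show "a \<in> topspace X" by (rule at)
    fix z assume "spec_le X z a"
    then have "spec_le X z a0" using e(1) by (rule spec_le_trans)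
    then have "spec_le X a0 z" using a0(2) by simp
    then show "spec_le X a z" using e(1) spec_le_trans by metis
  qed
  have "srep X a = srep X a0" using e by (rule srep_eq)
  then have "srep X a = a" by (simp add: a_def)
  then have "a \<in> Yset X" using ma by (simp add: Yset_def)
  moreover have "spec_le X a x" using e(1) a0(3) by (rule spec_le_trans)
  ultimately show ?thesis using ma by blast
qed

lemma highY:
  assumes fin: "finite (topspace X)" and x: "x \<in> topspace X"
  shows "\<exists>a\<in>Yset X. smax X a \<and> spec_le X x a"
proof -
  obtain a0 where a0: "a0 \<in> topspace X" "\<forall>z. spec_le X a0 z \<longrightarrow> spec_le X z a0" "spec_le X x a0"
    using exists_max[OF fin x] by blast
  define a where "a = srep X a0"
  have e: "spec_le X a a0" "spec_le X a0 a" using srep_equiv[OF a0(1)] by (simp_all add: a_def)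
  have at: "a \<in> topspace X" using e(1) by (simp add: spec_le_def)
  have ma: "smax X a"
    unfolding smax_def
  proof (intro conjI allI impI)
    show "a \<in> topspace X" by (rule at)
    fix z assume "spec_le X a z"
    then have "spec_le X a0 z" using e(2) spec_le_trans by metis
    then have "spec_le X z a0" using a0(2) by simp
    then show "spec_le X z a" using e(2) by (rule spec_le_trans)
  qed
  have "srep X a = srep X a0" using e by (rule srep_eq)
  then have "srep X a = a" by (simp add: a_def)
  then have "a \<in> Yset X" using ma by (simp add: Yset_def)
  moreover have "spec_le X x a" using a0(3) e(2) by (rule spec_le_trans)
  ultimately show ?thesis using ma by blast
qed

lemma Y_t0:
  shows "t0_space (subtopology X (Yset X))"
  unfolding t0_space_def
proof (intro ballI impI)
  fix a b assume a: "a \<in> topspace (subtopology X (Yset X))" and b: "b \<in> topspace (subtopology X (Yset X))"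
    and ab: "a \<noteq> b"
  have aY: "a \<in> Yset X" and bY: "b \<in> Yset X" using a b by auto
  have at: "a \<in> topspace X" using aY Yset_sub[of X] by blast
  have bt: "b \<in> topspace X" using bY Yset_sub[of X] by blast
  have "\<not> spec_le X a b \<or> \<not> spec_le X b a" using Yset_eq[OF aY bY] ab by blast
  then show "\<exists>U. openin (subtopology X (Yset X)) U \<and> (a \<notin> U \<longleftrightarrow> b \<in> U)"
  proof
    assume "\<not> spec_le X a b"
    then obtain U where U: "openin X U" "b \<in> U" "a \<notin> U" using at bt unfolding spec_le_def by blast
    have "openin (subtopology X (Yset X)) (U \<inter> Yset X)" using U(1) openin_subtopology by blast
    moreover have "a \<notin> U \<inter> Yset X" "b \<in> U \<inter> Yset X" using U bY by auto
    ultimately show ?thesis by blast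
  next
    assume "\<not> spec_le X b a"
    then obtain U where U: "openin X U" "a \<in> U" "b \<notin> U" using at bt unfolding spec_le_def by blast
    have "openin (subtopology X (Yset X)) (U \<inter> Yset X)" using U(1) openin_subtopology by blast
    moreover have "a \<in> U \<inter> Yset X" "b \<notin> U \<inter> Yset X" using U aY by auto
    ultimately show ?thesis by blast
  qed
qed

lemma Y_height:
  assumes fin: "finite (topspace X)"
  shows "height_le (subtopology X (Yset X)) 2"
  unfolding height_le_def
proof (intro allI impI)
  fix C assume C: "spec_chain (subtopology X (Yset X)) C"
  have CY: "C \<subseteq> Yset X" using C by (auto simp: spec_chain_def)
  have comp: "spec_le X a b \<or> spec_le X b a" if "a \<in> C" "b \<in> C" for a b
  proof -
    have "spec_le (subtopology X (Yset X)) a b \<or> spec_le (subtopology X (Yset X)) b a"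
      using C that by (auto simp: spec_chain_def)
    then show ?thesis using spec_le_sub[OF Yset_sub, of a X b] spec_le_sub[OF Yset_sub, of b X a] CY that by blast
  qed
  have finC: "finite C" using CY Yset_sub fin finite_subset by metis
  have C1: "card (C \<inter> {x. smin X x}) \<le> Suc 0"
  proof (subst card_le_Suc0_iff_eq)
    show "finite (C \<inter> {x. smin X x})" using finC by simp
    show "\<forall>a1\<in>C \<inter> {x. smin X x}. \<forall>a2\<in>C \<inter> {x. smin X x}. a1 = a2"
    proof (intro ballI)
      fix a b assume a: "a \<in> C \<inter> {x. smin X x}" and b: "b \<in> C \<inter> {x. smin X x}"
      have "spec_le X a b \<and> spec_le X b a"
      proof (cases "spec_le X a b")
        case True then show ?thesis using b by (simp add: smin_def)
      next
        case False then have "spec_le X b a" using comp a b by blast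
        then show ?thesis using a by (simp add: smin_def)
      qed
      moreover have "a \<in> Yset X" "b \<in> Yset X" using CY a b by auto
      ultimately show "a = b" using Yset_eq[of a X b] by blast
    qed
  qed
  have C2: "card (C \<inter> {x. smax X x}) \<le> Suc 0"
  proof (subst card_le_Suc0_iff_eq)
    show "finite (C \<inter> {x. smax X x})" using finC by simp
    show "\<forall>a1\<in>C \<inter> {x. smax X x}. \<forall>a2\<in>C \<inter> {x. smax X x}. a1 = a2"
    proof (intro ballI)
      fix a b assume a: "a \<in> C \<inter> {x. smax X x}" and b: "b \<in> C \<inter> {x. smax X x}"
      have "spec_le X a b \<and> spec_le X b a"
      proof (cases "spec_le X a b")
        case True then show ?thesis using a by (simp add: smax_def)
      next
        case False then have "spec_le X b a" using comp a b by blast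
        then show ?thesis using b by (simp add: smax_def)
      qed
      moreover have "a \<in> Yset X" "b \<in> Yset X" using CY a b by auto
      ultimately show "a = b" using Yset_eq[of a X b] by blast
    qed
  qed
  have "C = (C \<inter> {x. smin X x}) \<union> (C \<inter> {x. smax X x})" using CY by (auto simp: Yset_def)
  then have "card C \<le> card (C \<inter> {x. smin X x}) + card (C \<inter> {x. smax X x})"
    by (metis card_Un_le)
  then show "finite C \<and> card C \<le> 2" using C1 C2 finC by simp
qed




lemma Y_connected:
  assumes fin: "finite (topspace X)" and conn: "connected_space X"
  shows "connected_space (subtopology X (Yset X))"
proof -
  let ?Y = "Yset X"
  have tY: "topspace (subtopology X ?Y) = ?Y" using Yset_sub[of X] by auto
  have key: "openin X {x \<in> topspace X. \<exists>a\<in>E. spec_le X a x}"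
    if EY: "E \<subseteq> ?Y"
      and P1: "\<And>a m. a \<in> ?Y \<Longrightarrow> m \<in> E \<Longrightarrow> spec_le X a m \<Longrightarrow> a \<in> E"
      and P2: "\<And>a m. a \<in> E \<Longrightarrow> m \<in> ?Y \<Longrightarrow> spec_le X a m \<Longrightarrow> m \<in> E" for E
  proof (rule downclosed_open[OF fin])
    show "{x \<in> topspace X. \<exists>a\<in>E. spec_le X a x} \<subseteq> topspace X" by blast
    fix x z assume x: "x \<in> {x \<in> topspace X. \<exists>a\<in>E. spec_le X a x}" and zx: "spec_le X z x"
    then obtain a where a: "a \<in> E" "spec_le X a x" and xt: "x \<in> topspace X" by blast
    have zt: "z \<in> topspace X" using zx by (simp add: spec_le_def)
    obtain m where m: "m \<in> ?Y" "spec_le X x m" using highY[OF fin xt] by blast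
    have "spec_le X a m" using a(2) m(2) by (rule spec_le_trans)
    then have mE: "m \<in> E" using P2[OF a(1) m(1)] by blast
    obtain a' where a': "a' \<in> ?Y" "spec_le X a' z" using lowY[OF fin zt] by blast
    have "spec_le X a' x" using a'(2) zx by (rule spec_le_trans)
    then have "spec_le X a' m" using m(2) by (rule spec_le_trans)
    then have "a' \<in> E" using P1[OF a'(1) mE] by blast
    then show "z \<in> {x \<in> topspace X. \<exists>a\<in>E. spec_le X a x}" using a'(2) zt by blast
  qed
  show ?thesis
    unfolding connected_space_def
  proof
    assume "\<exists>E1 E2. openin (subtopology X ?Y) E1 \<and> openin (subtopology X ?Y) E2 \<and>
        topspace (subtopology X ?Y) \<subseteq> E1 \<union> E2 \<and> E1 \<inter> E2 = {} \<and> E1 \<noteq> {} \<and> E2 \<noteq> {}"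
    then obtain E1 E2 where o1: "openin (subtopology X ?Y) E1" and o2: "openin (subtopology X ?Y) E2"
      and cov0: "topspace (subtopology X ?Y) \<subseteq> E1 \<union> E2" and dis: "E1 \<inter> E2 = {}" and ne: "E1 \<noteq> {}" "E2 \<noteq> {}"
      by blast
    have cov: "?Y \<subseteq> E1 \<union> E2" using cov0 tY by simp
    have "\<exists>T. openin X T \<and> E1 = T \<inter> ?Y" using o1 by (simp only: openin_subtopology)
    then obtain T1 where T1: "openin X T1" "E1 = T1 \<inter> ?Y" by blast
    have "\<exists>T. openin X T \<and> E2 = T \<inter> ?Y" using o2 by (simp only: openin_subtopology)
    then obtain T2 where T2: "openin X T2" "E2 = T2 \<inter> ?Y" by blast
    have P1a: "a \<in> E1" if "a \<in> ?Y" "m \<in> E1" "spec_le X a m" for a m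
      using that T1 unfolding spec_le_def by blast
    have P1b: "a \<in> E2" if "a \<in> ?Y" "m \<in> E2" "spec_le X a m" for a m
      using that T2 unfolding spec_le_def by blast
    have P2a: "m \<in> E1" if "a \<in> E1" "m \<in> ?Y" "spec_le X a m" for a m
    proof (rule ccontr)
      assume "m \<notin> E1" then have "m \<in> E2" using cov that(2) by blast
      then have "a \<in> E2" using P1b[of a m] that T1 by blast
      then show False using dis that(1) by blast
    qed
    have P2b: "m \<in> E2" if "a \<in> E2" "m \<in> ?Y" "spec_le X a m" for a m
    proof (rule ccontr)
      assume "m \<notin> E2" then have "m \<in> E1" using cov that(2) by blast
      then have "a \<in> E1" using P1a[of a m] that T2 by blast
      then show False using dis that(1) by blast
    qed
    have E1Y: "E1 \<subseteq> ?Y" using T1 by blast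
    have E2Y: "E2 \<subseteq> ?Y" using T2 by blast
    define W1 where "W1 = {x \<in> topspace X. \<exists>a\<in>E1. spec_le X a x}"
    define W2 where "W2 = {x \<in> topspace X. \<exists>a\<in>E2. spec_le X a x}"
    have ow1: "openin X W1" unfolding W1_def by (rule key[OF E1Y P1a P2a])
    have ow2: "openin X W2" unfolding W2_def by (rule key[OF E2Y P1b P2b])
    have cW: "topspace X \<subseteq> W1 \<union> W2"
    proof
      fix x assume x: "x \<in> topspace X"
      obtain a where a: "a \<in> ?Y" "spec_le X a x" using lowY[OF fin x] by blast
      then have "a \<in> E1 \<or> a \<in> E2" using cov by blast
      then show "x \<in> W1 \<union> W2" using a x unfolding W1_def W2_def by blast
    qed
    have dW: "W1 \<inter> W2 = {}"
    proof (rule ccontr)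
      assume "W1 \<inter> W2 \<noteq> {}"
      then obtain x where x: "x \<in> W1" "x \<in> W2" by blast
      then obtain a1 a2 where a: "a1 \<in> E1" "spec_le X a1 x" "a2 \<in> E2" "spec_le X a2 x" and xt: "x \<in> topspace X"
        unfolding W1_def W2_def by blast
      obtain m where m: "m \<in> ?Y" "spec_le X x m" using highY[OF fin xt] by blast
      have "spec_le X a1 m" using a(2) m(2) by (rule spec_le_trans)
      then have "m \<in> E1" using P2a[OF a(1) m(1)] by blast
      moreover have "spec_le X a2 m" using a(4) m(2) by (rule spec_le_trans)
      then have "m \<in> E2" using P2b[OF a(3) m(1)] by blast
      ultimately show False using dis by blast
    qed
    have nW1: "W1 \<noteq> {}"
    proof -
      obtain a where a: "a \<in> E1" using ne(1) by blast
      then have "a \<in> topspace X" using E1Y Yset_sub[of X] by blast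
      then have "a \<in> W1" using a unfolding W1_def by (auto intro: spec_le_refl)
      then show ?thesis by blast
    qed
    have nW2: "W2 \<noteq> {}"
    proof -
      obtain a where a: "a \<in> E2" using ne(2) by blast
      then have "a \<in> topspace X" using E2Y Yset_sub[of X] by blast
      then have "a \<in> W2" using a unfolding W2_def by (auto intro: spec_le_refl)
      then show ?thesis by blast
    qed
    show False using conn ow1 ow2 cW dW nW1 nW2 unfolding connected_space_def by blast
  qed
qed




lemma fg_carrier: "carrier (fundamental_group X x) = {loop_class X x p | p. loopin X x p}"
  by (simp add: fundamental_group_def)

lemma fg_mult: "mult (fundamental_group X x) A B =
   loop_class X x (path_concat (SOME p. p \<in> A) (SOME q. q \<in> B))"
  by (simp add: fundamental_group_def)

theorem mainTheorem14:
  fixes X :: "'a topology"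
  assumes "finite (topspace X)"
    and "topspace X \<noteq> {}"
    and "connected_space X"
  shows "\<exists>S y h. S \<subseteq> topspace X \<and>
           connected_space (subtopology X S) \<and>
           t0_space (subtopology X S) \<and>
           height_le (subtopology X S) 2 \<and>
           y \<in> S \<and>
           h \<in> hom (fundamental_group (subtopology X S) y) (fundamental_group X y) \<and>
           h ` carrier (fundamental_group (subtopology X S) y) = carrier (fundamental_group X y)"
proof -
  note fin = assms(1)
  define Y where "Y = Yset X"
  define Z where "Z = subtopology X Y"
  obtain x0 where x0: "x0 \<in> topspace X" using assms(2) by blast
  obtain y where yY: "y \<in> Y" using lowY[OF fin x0] unfolding Y_def by blast
  have Ysub: "Y \<subseteq> topspace X" unfolding Y_def by (rule Yset_sub)
  have low: "\<exists>a\<in>Y. spec_le X a x" if "x \<in> topspace X" for x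
    using lowY[OF fin that] unfolding Y_def by blast
  have high: "\<exists>m\<in>Y. spec_le X x m" if "x \<in> topspace X" for x
    using highY[OF fin that] unfolding Y_def by blast
  define h where "h A = loop_class X y (SOME p. p \<in> A)" for A
  have loopZX: "loopin X y p" if "loopin Z y p" for p
    using that by (simp add: Z_def loopin_def pathin_subtopology)
  have hZ: "h (loop_class Z y p) = loop_class X y p" if p: "loopin Z y p" for p
  proof -
    have "loop_homotopic Z y p (SOME q. q \<in> loop_class Z y p)" by (rule loop_class_some[OF p])
    then have "loop_homotopic X y p (SOME q. q \<in> loop_class Z y p)"
      unfolding Z_def by (rule loop_homotopic_sub)
    then have "loop_class X y p = loop_class X y (SOME q. q \<in> loop_class Z y p)"
      by (rule loop_class_eq)
    then show ?thesis by (simp add: h_def)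
  qed
  have hom: "h \<in> hom (fundamental_group Z y) (fundamental_group X y)"
    unfolding hom_def
  proof (intro CollectI conjI funcsetI ballI)
    fix A assume "A \<in> carrier (fundamental_group Z y)"
    then obtain p where p: "loopin Z y p" "A = loop_class Z y p" by (auto simp: fg_carrier)
    have "h A = loop_class X y p" using hZ[OF p(1)] p(2) by simp
    then show "h A \<in> carrier (fundamental_group X y)" using loopZX[OF p(1)] by (auto simp: fg_carrier)
  next
    fix A B assume A: "A \<in> carrier (fundamental_group Z y)" and B: "B \<in> carrier (fundamental_group Z y)"
    obtain p where p: "loopin Z y p" "A = loop_class Z y p" using A by (auto simp: fg_carrier)
    obtain q where q: "loopin Z y q" "B = loop_class Z y q" using B by (auto simp: fg_carrier)
    define pA where "pA = (SOME p. p \<in> A)"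
    define pB where "pB = (SOME q. q \<in> B)"
    have hpA: "loop_homotopic Z y p pA" unfolding pA_def p(2) by (rule loop_class_some[OF p(1)])
    have hpB: "loop_homotopic Z y q pB" unfolding pB_def q(2) by (rule loop_class_some[OF q(1)])
    have lA: "loopin Z y pA" and lB: "loopin Z y pB" using hpA hpB by (auto simp: loop_homotopic_def)
    have "loop_homotopic Z y (path_concat pA pB) (path_concat pA pB)"
      by (rule loop_homotopic_concat[OF loop_homotopic_refl[OF lA] loop_homotopic_refl[OF lB]])
    then have lAB: "loopin Z y (path_concat pA pB)" by (simp add: loop_homotopic_def)
    have m1: "mult (fundamental_group Z y) A B = loop_class Z y (path_concat pA pB)"
      by (simp add: fg_mult pA_def pB_def)
    have e1: "h (mult (fundamental_group Z y) A B) = loop_class X y (path_concat pA pB)"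
      using hZ[OF lAB] m1 by simp
    have hA: "h A = loop_class X y pA" by (simp add: h_def pA_def)
    have hB: "h B = loop_class X y pB" by (simp add: h_def pB_def)
    have lA': "loopin X y pA" using loopZX[OF lA] .
    have lB': "loopin X y pB" using loopZX[OF lB] .
    define pA' where "pA' = (SOME p. p \<in> loop_class X y pA)"
    define pB' where "pB' = (SOME p. p \<in> loop_class X y pB)"
    have h1: "loop_homotopic X y pA pA'" unfolding pA'_def by (rule loop_class_some[OF lA'])
    have h2: "loop_homotopic X y pB pB'" unfolding pB'_def by (rule loop_class_some[OF lB'])
    have "mult (fundamental_group X y) (h A) (h B) = loop_class X y (path_concat pA' pB')"
      by (simp add: fg_mult hA hB pA'_def pB'_def)
    also have "\<dots> = loop_class X y (path_concat pA pB)"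
      by (rule loop_class_eq[OF loop_homotopic_sym[OF loop_homotopic_concat[OF h1 h2]]])
    finally show "h (mult (fundamental_group Z y) A B) = mult (fundamental_group X y) (h A) (h B)"
      using e1 by simp
  qed
  have surj: "h ` carrier (fundamental_group Z y) = carrier (fundamental_group X y)"
  proof
    show "h ` carrier (fundamental_group Z y) \<subseteq> carrier (fundamental_group X y)"
      using hom unfolding hom_def by blast
    show "carrier (fundamental_group X y) \<subseteq> h ` carrier (fundamental_group Z y)"
    proof
      fix C assume "C \<in> carrier (fundamental_group X y)"
      then obtain g where g: "loopin X y g" "C = loop_class X y g" by (auto simp: fg_carrier)
      obtain e where e: "loopin Z y e" "loop_homotopic X y g e"
        using loop_reduce[OF fin g(1) Ysub yY low high] unfolding Z_def by blast
      have "C = loop_class X y e" using g(2) loop_class_eq[OF e(2)] by simp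
      also have "\<dots> = h (loop_class Z y e)" using hZ[OF e(1)] by simp
      finally have "C = h (loop_class Z y e)" .
      moreover have "loop_class Z y e \<in> carrier (fundamental_group Z y)"
        using e(1) by (auto simp: fg_carrier)
      ultimately show "C \<in> h ` carrier (fundamental_group Z y)" by blast
    qed
  qed
  have "Y \<subseteq> topspace X \<and> connected_space (subtopology X Y) \<and> t0_space (subtopology X Y) \<and>
        height_le (subtopology X Y) 2 \<and> y \<in> Y"
    using Ysub Y_connected[OF fin assms(3)] Y_t0[of X] Y_height[OF fin] yY unfolding Y_def by blast
  then show ?thesis using hom surj unfolding Z_def by blast
qed


end
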